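(* Let $m\ge 2$ be an integer and let $a\in\mathbb{R}\setminus\mathbb{Z}^-$, where $\mathbb{Z}^-=\{k\in\mathbb{Z}: k\le 0\}$. Let $\mathcal{H}_\infty=(\mathcal{H}_{i_1\cdots i_m})$ be the $m$-order infinite dimensional generalized Hilbert tensor with entries $$\mathcal{H}_{i_1 i_2\cdots i_m}=\frac{1}{i_1+i_2+\cdots+i_m-m+a},\qquad i_1,\dots,i_m\in\{1,2,3,\dots\}.$$ Then for every $x=(x_i)_{i=1}^\infty\in l^1$: (i) the series $$\mathcal{H}_\infty x^m=\sum_{i_1,\dots,i_m=1}^\infty \frac{x_{i_1}x_{i_2}\cdots x_{i_m}}{i_1+i_2+\cdots+i_m-m+a}$$ converges absolutely; in particular $|\mathcal{H}_\infty x^m|<\infty$; (ii) for every positive integer $i$, the series $$(\mathcal{H}_\infty x^{m-1})_i=\sum_{i_2,\dots,i_m=1}^\infty \frac{x_{i_2}\cdots x_{i_m}}{i+i_2+\cdots+i_m-m+a}$$ converges absolutely, so that the infinite vector $\mathcal{H}_\infty x^{m-1}$ is well defined.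
   Context: $l^1$ denotes the space of real sequences $x=(x_i)_{i=1}^\infty$ with $\sum_{i=1}^\infty|x_i|<\infty$. Since $a\notin\mathbb{Z}^-$ and $i_1+\cdots+i_m-m$ is a nonnegative integer, all denominators are nonzero. *)

theory Defs
  imports "HOL-Analysis.Analysis"
begin

definition gen_hilbert :: "nat \<Rightarrow> real \<Rightarrow> (nat \<Rightarrow> nat) \<Rightarrow> real" where
  "gen_hilbert m a \<iota> = 1 / ((\<Sum>k<m. real (\<iota> k)) - real m + a)"

definition pos_multi_idx :: "nat \<Rightarrow> (nat \<Rightarrow> nat) set" where
  "pos_multi_idx n = PiE {..<n} (\<lambda>_. {1..})"

definition l1_seq :: "(nat \<Rightarrow> real) \<Rightarrow> bool" where
  "l1_seq x \<longleftrightarrow> (\<lambda>i. \<bar>x i\<bar>) summable_on {1..}"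

end

theory Submission
  imports Defs
begin

lemma hilbert_bound:
  fixes a :: real
  assumes "\<forall>k::int. k \<le> 0 \<longrightarrow> a \<noteq> of_int k"
  shows "\<exists>C. \<forall>n::nat. \<bar>1 / (real n + a)\<bar> \<le> C"
proof -
  define N where "N = nat (ceiling \<bar>a\<bar>) + 1"
  define C where "C = (\<Sum>n\<le>N. \<bar>1 / (real n + a)\<bar>) + 1"
  have "\<bar>1 / (real n + a)\<bar> \<le> C" for n
  proof (cases "n \<le> N")
    case True
    have "\<bar>1 / (real n + a)\<bar> \<le> (\<Sum>n\<le>N. \<bar>1 / (real n + a)\<bar>)"
      using True by (intro member_le_sum) auto
    then show ?thesis unfolding C_def by linarith
  next
    case False
    have "real N \<le> real n" using False by simp
    moreover have "real N \<ge> \<bar>a\<bar> + 1" unfolding N_def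
      using real_nat_ceiling_ge[of "\<bar>a\<bar>"] by simp
    ultimately have "real n \<ge> \<bar>a\<bar> + 1" by linarith
    then have "real n + a \<ge> 1" by linarith
    then have "\<bar>1 / (real n + a)\<bar> \<le> 1" by simp
    moreover have "0 \<le> (\<Sum>n\<le>N. \<bar>1 / (real n + a)\<bar>)" by (intro sum_nonneg) auto
    ultimately show ?thesis unfolding C_def by linarith
  qed
  then show ?thesis by blast
qed

lemma prod_summable:
  assumes "l1_seq x"
  shows "(\<lambda>\<iota>. \<bar>\<Prod>k<n. x (\<iota> k)\<bar>) summable_on pos_multi_idx n"
proof -
  have "Infinite_Set_Sum.abs_summable_on x {1..}"
    using assms unfolding l1_seq_def abs_summable_equivalent[symmetric] by simp
  then have "Infinite_Set_Sum.abs_summable_on (\<lambda>g. \<Prod>k<n. x (g k)) (PiE {..<n} (\<lambda>_. {1::nat..}))"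
    by (intro Infinite_Set_Sum.abs_summable_on_prod_PiE) auto
  then show ?thesis unfolding abs_summable_equivalent[symmetric] pos_multi_idx_def by simp
qed

theorem proposition1p1:
  fixes m :: nat and a :: real and x :: "nat \<Rightarrow> real"
  assumes "m \<ge> 2"
    and "\<forall>k::int. k \<le> 0 \<longrightarrow> a \<noteq> of_int k"
    and "l1_seq x"
  shows "(\<lambda>\<iota>. \<bar>gen_hilbert m a \<iota> * (\<Prod>k<m. x (\<iota> k))\<bar>) summable_on pos_multi_idx m
     \<and> (\<forall>i\<ge>1. (\<lambda>\<iota>. \<bar>gen_hilbert m a (\<iota>(m - 1 := i)) * (\<Prod>k<m - 1. x (\<iota> k))\<bar>)
                 summable_on pos_multi_idx (m - 1))"
proof -
  obtain C where C: "\<And>n::nat. \<bar>1 / (real n + a)\<bar> \<le> C" using hilbert_bound[OF assms(2)] by blast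
  have HB: "\<bar>gen_hilbert m a \<iota>\<bar> \<le> C" if "\<And>k. k < m \<Longrightarrow> \<iota> k \<ge> 1" for \<iota>
  proof -
    have "(\<Sum>k<m. real (\<iota> k)) \<ge> (\<Sum>k<m. 1)" using that by (intro sum_mono) auto
    then have ge: "(\<Sum>k<m. \<iota> k) \<ge> m" by (simp flip: of_nat_sum)
    have "(\<Sum>k<m. real (\<iota> k)) - real m + a = real ((\<Sum>k<m. \<iota> k) - m) + a"
      using ge by (simp flip: of_nat_sum add: of_nat_diff)
    then show ?thesis unfolding gen_hilbert_def using C by metis
  qed
  have C0: "C \<ge> 0" using C[of 0] by linarith
  have P1: "(\<lambda>\<iota>. C * \<bar>\<Prod>k<m. x (\<iota> k)\<bar>) summable_on pos_multi_idx m"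
    by (intro summable_on_cmult_right prod_summable assms(3))
  have S1: "(\<lambda>\<iota>. \<bar>gen_hilbert m a \<iota> * (\<Prod>k<m. x (\<iota> k))\<bar>) summable_on pos_multi_idx m"
  proof (rule summable_on_comparison_test[OF P1])
    fix \<iota> assume "\<iota> \<in> pos_multi_idx m"
    then have "\<And>k. k < m \<Longrightarrow> \<iota> k \<ge> 1" unfolding pos_multi_idx_def by auto
    then have "\<bar>gen_hilbert m a \<iota>\<bar> \<le> C" by (rule HB)
    then show "\<bar>gen_hilbert m a \<iota> * (\<Prod>k<m. x (\<iota> k))\<bar> \<le> C * \<bar>\<Prod>k<m. x (\<iota> k)\<bar>"
      by (simp add: abs_mult mult_right_mono)
  qed auto
  have S2: "(\<lambda>\<iota>. \<bar>gen_hilbert m a (\<iota>(m - 1 := i)) * (\<Prod>k<m - 1. x (\<iota> k))\<bar>)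
                 summable_on pos_multi_idx (m - 1)" if i: "i \<ge> 1" for i
  proof -
    have P2: "(\<lambda>\<iota>. C * \<bar>\<Prod>k<m-1. x (\<iota> k)\<bar>) summable_on pos_multi_idx (m-1)"
      by (intro summable_on_cmult_right prod_summable assms(3))
    show ?thesis
    proof (rule summable_on_comparison_test[OF P2])
      fix \<iota> assume "\<iota> \<in> pos_multi_idx (m-1)"
      then have "\<And>k. k < m-1 \<Longrightarrow> \<iota> k \<ge> 1" unfolding pos_multi_idx_def by auto
      then have "\<And>k. k < m \<Longrightarrow> (\<iota>(m - 1 := i)) k \<ge> 1" using i by auto
      then have "\<bar>gen_hilbert m a (\<iota>(m - 1 := i))\<bar> \<le> C" by (rule HB)
      then show "\<bar>gen_hilbert m a (\<iota>(m - 1 := i)) * (\<Prod>k<m-1. x (\<iota> k))\<bar> \<le> C * \<bar>\<Prod>k<m-1. x (\<iota> k)\<bar>"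
        by (simp add: abs_mult mult_right_mono)
    qed auto
  qed
  show ?thesis using S1 S2 by blast
qed

end
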